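(* Assume the distribution $\mathcal D_2(\lambda)$ defined in the context. Let $G\in\mathcal G_{d,k}$ be a structure in which at least one of $X_a,X_b$ has children other than $X_a,X_b$. Then $\mathcal S(G)<\mathcal S^*-\beta+3d\lambda$.
   Context: Entropies use the natural logarithm; $k$ is a fixed positive integer. For a set of variables, a family is $\langle Y,\Pi\rangle$ with $\Pi$ not containing $Y$ and $|\Pi|\le k$, with $H(\langle Y,\Pi\rangle)=H(Y\mid\Pi)$; DAGs are identified with their sets of families and have score $\mathcal S(G)=-\sum_{f\in G}H(f)$. Markov-equivalent DAGs form equivalence classes (ECs) with a common score. Construction. $\mathcal D_1$ is a distribution over a finite set $\mathbf X_1$ of at least $k$ discrete variables, containing a variable $X_a$, such that for some $\alpha,\beta>0$: (I) among DAGs over $\mathbf X_1$ with in-degree $\le k$ there is a unique optimal EC, with score gap at least $\beta$ to the next-best EC; (II) $X_a$ has no children in any structure of the optimal EC; (III) $H(X_a\mid\mathbf X_1\setminus\{X_a\})=\alpha$. Let $\mathbf X=\mathbf X_1\cup\{X_b\}$, $d=|\mathbf X|$. For $\lambda\in(0,\min(\alpha,\beta/(3d)))$, $\mathcal D_2(\lambda)$ is a distribution on $\mathbf X$ with marginal $\mathcal D_1$ on $\mathbf X_1$ such that: (IV) there is a hidden Bernoulli variable $C$ independent of $\mathbf X_1$ with $P[X_b=X_a\mid C=1]=1$ and $X_b$ independent of $\mathbf X_1$ given $C=0$; (V) $\max(H(X_b\mid X_a),H(X_a\mid X_b))=\lambda$. $\mathcal G_{d,k}$ is the set of DAGs over $\mathbf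 X$ with in-degree at most $k$, scores are computed under $\mathcal D_2(\lambda)$, and $\mathcal S^*=\max_{G\in\mathcal G_{d,k}}\mathcal S(G)$. *)

theory Defs
  imports "HOL-Probability.Probability"
begin

text \<open>A joint distribution is a pmf over assignments 'i \<Rightarrow> 'v (only the coordinates in the
 relevant variable set matter).\<close>

definition marg :: "'i set \<Rightarrow> ('i \<Rightarrow> 'v) pmf \<Rightarrow> ('i \<Rightarrow> 'v) pmf" where
  "marg S p = map_pmf (\<lambda>a. restrict a S) p"

definition ent :: "('i \<Rightarrow> 'v) pmf \<Rightarrow> 'i set \<Rightarrow> real" where
  "ent p S = (\<Sum>x\<in>set_pmf (marg S p). - pmf (marg S p) x * ln (pmf (marg S p) x))"

definition condH :: "('i \<Rightarrow> 'v) pmf \<Rightarrow> 'i \<Rightarrow> 'i set \<Rightarrow> real" where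
  "condH p Y Par = ent p (insert Y Par) - ent p Par"

text \<open>A DAG over V is given by its parent function (equivalently its set of families
 \<langle>v, pa v\<rangle>, v \<in> V); in-degree at most k.\<close>
definition edges :: "('i \<Rightarrow> 'i set) \<Rightarrow> ('i \<times> 'i) set" where
  "edges pa = {(u, v). u \<in> pa v}"

definition dag_k :: "'i set \<Rightarrow> nat \<Rightarrow> ('i \<Rightarrow> 'i set) \<Rightarrow> bool" where
  "dag_k V k pa \<longleftrightarrow>
     (\<forall>v\<in>V. pa v \<subseteq> V - {v} \<and> card (pa v) \<le> k) \<and>
     (\<forall>v. v \<notin> V \<longrightarrow> pa v = {}) \<and> acyclic (edges pa)"

definition score :: "('i \<Rightarrow> 'v) pmf \<Rightarrow> 'i set \<Rightarrow> ('i \<Rightarrow> 'i set) \<Rightarrow> real" where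
  "score p V pa = - (\<Sum>v\<in>V. condH p v (pa v))"

definition opt_score :: "('i \<Rightarrow> 'v) pmf \<Rightarrow> 'i set \<Rightarrow> nat \<Rightarrow> real" where
  "opt_score p V k = Max (score p V ` {G. dag_k V k G})"

definition optimal :: "('i \<Rightarrow> 'v) pmf \<Rightarrow> 'i set \<Rightarrow> nat \<Rightarrow> ('i \<Rightarrow> 'i set) \<Rightarrow> bool" where
  "optimal p V k G \<longleftrightarrow> dag_k V k G \<and> score p V G = opt_score p V k"

definition adj :: "('i \<Rightarrow> 'i set) \<Rightarrow> 'i \<Rightarrow> 'i \<Rightarrow> bool" where
  "adj pa u v \<longleftrightarrow> u \<in> pa v \<or> v \<in> pa u"

definition is_path :: "('i \<Rightarrow> 'i set) \<Rightarrow> 'i list \<Rightarrow> bool" where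
  "is_path pa xs \<longleftrightarrow> length xs \<ge> 2 \<and> distinct xs \<and>
     (\<forall>i. Suc i < length xs \<longrightarrow> adj pa (xs ! i) (xs ! Suc i))"

definition collider :: "('i \<Rightarrow> 'i set) \<Rightarrow> 'i list \<Rightarrow> nat \<Rightarrow> bool" where
  "collider pa xs i \<longleftrightarrow> xs ! (i - 1) \<in> pa (xs ! i) \<and> xs ! (i + 1) \<in> pa (xs ! i)"

definition active :: "('i \<Rightarrow> 'i set) \<Rightarrow> 'i set \<Rightarrow> 'i list \<Rightarrow> bool" where
  "active pa Z xs \<longleftrightarrow>
     (\<forall>i. 0 < i \<and> i + 1 < length xs \<longrightarrow>
        (collider pa xs i \<longrightarrow> (\<exists>w\<in>Z. (xs ! i, w) \<in> (edges pa)\<^sup>*)) \<and>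
        (\<not> collider pa xs i \<longrightarrow> xs ! i \<notin> Z))"

definition d_sep :: "('i \<Rightarrow> 'i set) \<Rightarrow> 'i \<Rightarrow> 'i \<Rightarrow> 'i set \<Rightarrow> bool" where
  "d_sep pa x y Z \<longleftrightarrow>
     \<not> (\<exists>xs. is_path pa xs \<and> hd xs = x \<and> last xs = y \<and> active pa Z xs)"

definition markov_equiv :: "'i set \<Rightarrow> ('i \<Rightarrow> 'i set) \<Rightarrow> ('i \<Rightarrow> 'i set) \<Rightarrow> bool" where
  "markov_equiv V G G' \<longleftrightarrow>
     (\<forall>x\<in>V. \<forall>y\<in>V. \<forall>Z. Z \<subseteq> V \<and> x \<noteq> y \<and> x \<notin> Z \<and> y \<notin> Z \<longrightarrow>
        (d_sep G x y Z \<longleftrightarrow> d_sep G' x y Z))"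

end

theory Submission
  imports Defs
begin


definition Hf :: "'a pmf \<Rightarrow> ('a \<Rightarrow> 'b) \<Rightarrow> real" where
  "Hf p f = (\<Sum>u\<in>set_pmf (map_pmf f p). - pmf (map_pmf f p) u * ln (pmf (map_pmf f p) u))"

lemma group_sum:
  assumes fin: "finite (set_pmf p)"
  shows "(\<Sum>w\<in>set_pmf p. pmf p w * \<phi> (f w)) = (\<Sum>u\<in>set_pmf (map_pmf f p). pmf (map_pmf f p) u * \<phi> u)"
proof -
  have "(\<Sum>w\<in>set_pmf p. pmf p w * \<phi> (f w)) = (\<integral>w. \<phi> (f w) \<partial>measure_pmf p)"
    by (subst integral_measure_pmf_real[where A="set_pmf p"]) (auto simp: fin mult.commute)
  also have "\<dots> = (\<integral>u. \<phi> u \<partial>measure_pmf (map_pmf f p))" by simp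
  also have "\<dots> = (\<Sum>u\<in>set_pmf (map_pmf f p). pmf (map_pmf f p) u * \<phi> u)"
    by (subst integral_measure_pmf_real[where A="set_pmf (map_pmf f p)"]) (auto simp: fin mult.commute)
  finally show ?thesis .
qed

lemma Hsum:
  assumes fin: "finite (set_pmf p)"
  shows "Hf p f = (\<Sum>w\<in>set_pmf p. pmf p w * - ln (pmf (map_pmf f p) (f w)))"
  unfolding Hf_def using group_sum[OF fin, of "\<lambda>u. - ln (pmf (map_pmf f p) u)" f] by simp

lemma pmf_map_pos: "w \<in> set_pmf p \<Longrightarrow> 0 < pmf (map_pmf f p) (f w)"
  by (simp add: pmf_positive)

lemma H_comp_le:
  assumes fin: "finite (set_pmf p)"
  shows "Hf p (\<lambda>w. g (f w)) \<le> Hf p f"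
proof -
  have "(\<Sum>w\<in>set_pmf p. pmf p w * - ln (pmf (map_pmf (\<lambda>w. g (f w)) p) (g (f w))))
      \<le> (\<Sum>w\<in>set_pmf p. pmf p w * - ln (pmf (map_pmf f p) (f w)))"
  proof (rule sum_mono)
    fix w assume w: "w \<in> set_pmf p"
    have "pmf (map_pmf f p) (f w) \<le> pmf (map_pmf (\<lambda>w. g (f w)) p) (g (f w))"
      unfolding pmf_map by (rule measure_pmf.finite_measure_mono) auto
    hence "ln (pmf (map_pmf f p) (f w)) \<le> ln (pmf (map_pmf (\<lambda>w. g (f w)) p) (g (f w)))"
      using pmf_map_pos[OF w, of f] by simp
    thus "pmf p w * - ln (pmf (map_pmf (\<lambda>w. g (f w)) p) (g (f w))) \<le> pmf p w * - ln (pmf (map_pmf f p) (f w))"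
      by (intro mult_left_mono) auto
  qed
  thus ?thesis by (simp add: Hsum[OF fin])
qed

lemma marg_fst:
  assumes fin: "finite (set_pmf P)"
  shows "pmf (map_pmf fst P) y = (\<Sum>z\<in>{z. (y, z) \<in> set_pmf P}. pmf P (y, z))"
proof -
  have "pmf (map_pmf fst P) y = measure P (fst -` {y} \<inter> set_pmf P)"
    by (simp add: pmf_map measure_Int_set_pmf)
  also have "\<dots> = (\<Sum>w\<in>fst -` {y} \<inter> set_pmf P. pmf P w)"
    using fin by (simp add: measure_measure_pmf_finite)
  also have "fst -` {y} \<inter> set_pmf P = (\<lambda>z. (y, z)) ` {z. (y, z) \<in> set_pmf P}" by force
  also have "(\<Sum>w\<in>\<dots>. pmf P w) = (\<Sum>z\<in>{z. (y, z) \<in> set_pmf P}. pmf P (y, z))"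
    by (subst sum.reindex) (auto simp: inj_on_def)
  finally show ?thesis .
qed

lemma H_submod:
  assumes fin: "finite (set_pmf p)"
  shows "Hf p (\<lambda>w. (X w, Y w, Z w)) + Hf p Y \<le> Hf p (\<lambda>w. (X w, Y w)) + Hf p (\<lambda>w. (Y w, Z w))"
proof -
  define Pa where "Pa = map_pmf (\<lambda>w. (X w, Y w, Z w)) p"
  define Pb where "Pb = map_pmf (\<lambda>w. (X w, Y w)) p"
  define Pc where "Pc = map_pmf (\<lambda>w. (Y w, Z w)) p"
  define Pd where "Pd = map_pmf Y p"
  define a where "a w = pmf Pa (X w, Y w, Z w)" for w
  define b where "b w = pmf Pb (X w, Y w)" for w
  define c where "c w = pmf Pc (Y w, Z w)" for w
  define d where "d w = pmf Pd (Y w)" for w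
  have pos: "0 < a w" "0 < b w" "0 < c w" "0 < d w" if "w \<in> set_pmf p" for w
    using that unfolding a_def b_def c_def d_def Pa_def Pb_def Pc_def Pd_def
    by (auto simp: pmf_positive)
  define \<kappa> where "\<kappa> t = (case t of (x, y, z) \<Rightarrow> pmf Pb (x, y) * pmf Pc (y, z) / pmf Pd y)" for t
  define \<psi> where "\<psi> t = \<kappa> t / pmf Pa t" for t
  have \<kappa>_nn: "0 \<le> \<kappa> t" for t unfolding \<kappa>_def by (auto split: prod.splits)
  have finA: "finite (set_pmf Pa)" "finite (set_pmf Pb)" "finite (set_pmf Pc)"
    unfolding Pa_def Pb_def Pc_def using fin by auto
  have fz: "finite {z. (y, z) \<in> set_pmf Pc}" for y
    by (rule finite_subset[of _ "snd ` set_pmf Pc"]) (force simp: finA)+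
  have key: "(\<Sum>w\<in>set_pmf p. pmf p w * (b w * c w / (a w * d w))) \<le> 1"
  proof -
    have "(\<Sum>w\<in>set_pmf p. pmf p w * (b w * c w / (a w * d w)))
        = (\<Sum>w\<in>set_pmf p. pmf p w * \<psi> (X w, Y w, Z w))"
      by (simp add: \<psi>_def \<kappa>_def a_def b_def c_def d_def mult.commute)
    also have "\<dots> = (\<Sum>t\<in>set_pmf Pa. pmf Pa t * \<psi> t)"
      unfolding Pa_def by (rule group_sum[OF fin])
    also have "\<dots> = (\<Sum>t\<in>set_pmf Pa. \<kappa> t)"
      by (rule sum.cong) (auto simp: \<psi>_def pmf_positive[of _ Pa] less_imp_neq[OF pmf_positive] set_pmf_eq)
    also have "\<dots> \<le> (\<Sum>t\<in>(\<lambda>((x, y), z). (x, y, z)) ` (SIGMA u:set_pmf Pb. {z. (snd u, z) \<in> set_pmf Pc}). \<kappa> t)"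
    proof (rule sum_mono2)
      have "finite (SIGMA u:set_pmf Pb. {z. (snd u, z) \<in> set_pmf Pc})"
        using finA fz by (intro finite_SigmaI) auto
      thus "finite ((\<lambda>((x, y), z). (x, y, z)) ` (SIGMA u:set_pmf Pb. {z. (snd u, z) \<in> set_pmf Pc}))"
        by simp
      show "set_pmf Pa \<subseteq> (\<lambda>((x, y), z). (x, y, z)) ` (SIGMA u:set_pmf Pb. {z. (snd u, z) \<in> set_pmf Pc})"
        unfolding Pa_def Pb_def Pc_def by (auto simp: image_iff) blast
    qed (auto simp: \<kappa>_nn)
    also have "\<dots> = (\<Sum>v\<in>(SIGMA u:set_pmf Pb. {z. (snd u, z) \<in> set_pmf Pc}). \<kappa> (fst (fst v), snd (fst v), snd v))"
      by (subst sum.reindex) (auto simp: inj_on_def intro!: sum.cong)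
    also have "\<dots> = (\<Sum>u\<in>set_pmf Pb. \<Sum>z\<in>{z. (snd u, z) \<in> set_pmf Pc}. \<kappa> (fst u, snd u, z))"
      by (subst sum.Sigma) (use finA fz in \<open>auto simp: split_beta\<close>)
    also have "\<dots> = (\<Sum>u\<in>set_pmf Pb. pmf Pb u)"
    proof (rule sum.cong[OF refl])
      fix u assume u: "u \<in> set_pmf Pb"
      have Pd_eq: "Pd = map_pmf fst Pc" unfolding Pd_def Pc_def by (simp add: pmf.map_comp o_def)
      have dpos: "0 < pmf Pd (snd u)"
        using u unfolding Pd_def Pb_def by (auto simp: pmf_positive)
      have "(\<Sum>z\<in>{z. (snd u, z) \<in> set_pmf Pc}. \<kappa> (fst u, snd u, z))
          = pmf Pb u / pmf Pd (snd u) * (\<Sum>z\<in>{z. (snd u, z) \<in> set_pmf Pc}. pmf Pc (snd u, z))"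
        by (simp add: \<kappa>_def sum_distrib_left)
      also have "(\<Sum>z\<in>{z. (snd u, z) \<in> set_pmf Pc}. pmf Pc (snd u, z)) = pmf Pd (snd u)"
        unfolding Pd_eq by (rule marg_fst[symmetric]) (simp add: finA)
      finally show "(\<Sum>z\<in>{z. (snd u, z) \<in> set_pmf Pc}. \<kappa> (fst u, snd u, z)) = pmf Pb u"
        using dpos by simp
    qed
    also have "\<dots> = 1" by (rule sum_pmf_eq_1) (auto simp: finA)
    finally show ?thesis .
  qed
  have "Hf p (\<lambda>w. (X w, Y w, Z w)) + Hf p Y - Hf p (\<lambda>w. (X w, Y w)) - Hf p (\<lambda>w. (Y w, Z w))
      = (\<Sum>w\<in>set_pmf p. pmf p w * ln (b w * c w / (a w * d w)))"
    unfolding Hsum[OF fin] sum_subtractf[symmetric] sum.distrib[symmetric]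
  proof (rule sum.cong[OF refl])
    fix w assume w: "w \<in> set_pmf p"
    have eq: "ln (b w * c w / (a w * d w)) = ln (b w) + ln (c w) - ln (a w) - ln (d w)"
      using pos[OF w] by (simp add: ln_div ln_mult)
    have e2: "pmf p w * ln (b w * c w / (a w * d w)) = pmf p w * ln (b w) + pmf p w * ln (c w) - pmf p w * ln (a w) - pmf p w * ln (d w)"
      unfolding eq by (simp add: algebra_simps)
    show "pmf p w * - ln (pmf (map_pmf (\<lambda>w. (X w, Y w, Z w)) p) (X w, Y w, Z w)) +
         pmf p w * - ln (pmf (map_pmf Y p) (Y w)) -
         pmf p w * - ln (pmf (map_pmf (\<lambda>w. (X w, Y w)) p) (X w, Y w)) -
         pmf p w * - ln (pmf (map_pmf (\<lambda>w. (Y w, Z w)) p) (Y w, Z w)) =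
         pmf p w * ln (b w * c w / (a w * d w))"
      unfolding e2 by (simp add: algebra_simps a_def b_def c_def d_def Pa_def Pb_def Pc_def Pd_def)
  qed
  also have "\<dots> \<le> (\<Sum>w\<in>set_pmf p. pmf p w * (b w * c w / (a w * d w) - 1))"
    by (intro sum_mono mult_left_mono ln_le_minus_one) (auto simp: pos)
  also have "\<dots> = (\<Sum>w\<in>set_pmf p. pmf p w * (b w * c w / (a w * d w))) - (\<Sum>w\<in>set_pmf p. pmf p w)"
    by (simp add: algebra_simps sum_subtractf)
  also have "(\<Sum>w\<in>set_pmf p. pmf p w) = 1" by (rule sum_pmf_eq_1) (auto simp: fin)
  finally show ?thesis using key by simp
qed


lemma Hf_eq_comp:
  assumes fin: "finite (set_pmf p)" and "\<And>w. f w = g (h w)" and "\<And>w. h w = g' (f w)"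
  shows "Hf p f = Hf p h"
proof -
  have "Hf p f = Hf p (\<lambda>w. g (h w))" using assms(2) by presburger
  also have "\<dots> \<le> Hf p h" by (rule H_comp_le[OF fin])
  finally have 1: "Hf p f \<le> Hf p h" .
  have "Hf p h = Hf p (\<lambda>w. g' (f w))" using assms(3) by presburger
  also have "\<dots> \<le> Hf p f" by (rule H_comp_le[OF fin])
  finally show ?thesis using 1 by simp
qed

definition join :: "'i set \<Rightarrow> ('i \<Rightarrow> 'v) \<Rightarrow> ('i \<Rightarrow> 'v) \<Rightarrow> 'i \<Rightarrow> 'v" where
  "join A u v = (\<lambda>i. if i \<in> A then u i else v i)"

lemma restrict_join: "restrict w (A \<union> C) = join A (restrict w A) (restrict w C)"
  by (auto simp: join_def restrict_def)

lemma ent_Hf: "ent p S = Hf (marg V p) (\<lambda>a. restrict a S)" if "S \<subseteq> V"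
proof -
  have "marg S p = map_pmf (\<lambda>a. restrict a S) (marg V p)"
    unfolding marg_def pmf.map_comp o_def using that by (simp add: Int_absorb1 Int_absorb2)
  thus ?thesis unfolding ent_def Hf_def by simp
qed

lemma ent_marg: "S \<subseteq> V \<Longrightarrow> ent (marg V p) S = ent p S"
  unfolding ent_def marg_def pmf.map_comp o_def by (simp add: Int_absorb1 Int_absorb2)

lemma ent_mono:
  assumes fin: "finite (set_pmf (marg V p))" and "S \<subseteq> T" "T \<subseteq> V"
  shows "ent p S \<le> ent p T"
proof -
  have "ent p S = Hf (marg V p) (\<lambda>a. restrict (restrict a T) S)"
    using assms by (simp add: ent_Hf[of S V] Int_absorb1 Int_absorb2)
  also have "\<dots> \<le> Hf (marg V p) (\<lambda>a. restrict a T)" by (rule H_comp_le[OF fin])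
  also have "\<dots> = ent p T" using assms by (simp add: ent_Hf[of T V])
  finally show ?thesis .
qed

lemma ent_submod:
  assumes fin: "finite (set_pmf (marg V p))" and V: "A \<union> B \<union> C \<subseteq> V"
  shows "ent p (A \<union> B \<union> C) + ent p C \<le> ent p (A \<union> C) + ent p (B \<union> C)"
proof -
  let ?q = "marg V p"
  have e1: "ent p (A \<union> B \<union> C) = Hf ?q (\<lambda>w. (restrict w A, restrict w C, restrict w B))"
  proof -
    have "ent p (A \<union> B \<union> C) = Hf ?q (\<lambda>w. restrict w (A \<union> B \<union> C))" using V by (simp add: ent_Hf[of _ V])
    also have "\<dots> = Hf ?q (\<lambda>w. (restrict w A, restrict w C, restrict w B))"
    proof (rule Hf_eq_comp[OF fin])
      show "restrict w (A \<union> B \<union> C) = (\<lambda>(u, v, z). join A u (join C v z)) (restrict w A, restrict w C, restrict w B)" for w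
        by (auto simp: join_def restrict_def)
      show "(restrict w A, restrict w C, restrict w B) = (\<lambda>r. (restrict r A, restrict r C, restrict r B)) (restrict w (A \<union> B \<union> C))" for w
        by (auto simp: Int_absorb1)
    qed
    finally show ?thesis .
  qed
  have e2: "ent p (A \<union> C) = Hf ?q (\<lambda>w. (restrict w A, restrict w C))"
  proof -
    have "ent p (A \<union> C) = Hf ?q (\<lambda>w. restrict w (A \<union> C))" using V by (simp add: ent_Hf[of _ V])
    also have "\<dots> = Hf ?q (\<lambda>w. (restrict w A, restrict w C))"
    proof (rule Hf_eq_comp[OF fin])
      show "restrict w (A \<union> C) = (\<lambda>(u, v). join A u v) (restrict w A, restrict w C)" for w
        by (auto simp: join_def restrict_def)
      show "(restrict w A, restrict w C) = (\<lambda>r. (restrict r A, restrict r C)) (restrict w (A \<union> C))" for w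
        by (auto simp: Int_absorb1)
    qed
    finally show ?thesis .
  qed
  have e3: "ent p (B \<union> C) = Hf ?q (\<lambda>w. (restrict w C, restrict w B))"
  proof -
    have "ent p (B \<union> C) = Hf ?q (\<lambda>w. restrict w (B \<union> C))" using V by (simp add: ent_Hf[of _ V])
    also have "\<dots> = Hf ?q (\<lambda>w. (restrict w C, restrict w B))"
    proof (rule Hf_eq_comp[OF fin])
      show "restrict w (B \<union> C) = (\<lambda>(u, v). join C u v) (restrict w C, restrict w B)" for w
        by (auto simp: join_def restrict_def)
      show "(restrict w C, restrict w B) = (\<lambda>r. (restrict r C, restrict r B)) (restrict w (B \<union> C))" for w
        by (auto simp: Int_absorb1)
    qed
    finally show ?thesis .
  qed
  have e4: "ent p C = Hf ?q (\<lambda>w. restrict w C)" using V by (simp add: ent_Hf[of _ V])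
  show ?thesis unfolding e1 e2 e3 e4 by (rule H_submod[OF fin])
qed

lemma cond_nn:
  assumes fin: "finite (set_pmf (marg V p))" and "insert v S \<subseteq> V"
  shows "0 \<le> condH p v S"
  using ent_mono[OF fin, of S "insert v S"] assms unfolding condH_def by auto

lemma cond_reduce:
  assumes fin: "finite (set_pmf (marg V p))" and V: "insert v (S \<union> T) \<subseteq> V"
  shows "condH p v (S \<union> T) \<le> condH p v S"
proof -
  have "ent p ({v} \<union> T \<union> S) + ent p S \<le> ent p ({v} \<union> S) + ent p (T \<union> S)"
    by (rule ent_submod[OF fin]) (use V in auto)
  moreover have "{v} \<union> T \<union> S = insert v (S \<union> T)" "{v} \<union> S = insert v S" "T \<union> S = S \<union> T" by auto
  ultimately show ?thesis unfolding condH_def by simp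
qed

lemma cond_chain:
  assumes fin: "finite (set_pmf (marg V p))" and V: "insert v (insert b S) \<subseteq> V"
  shows "condH p v S \<le> condH p v (insert b S) + condH p b S"
  using ent_mono[OF fin, of "insert v S" "insert v (insert b S)"] V unfolding condH_def by auto




lemma transA:
  assumes nb: "(b, a) \<notin> E\<^sup>+"
  shows "trans {(u, w). (u, w) \<in> E\<^sup>+ \<or> ((u = a \<or> (u, a) \<in> E\<^sup>+) \<and> (b, w) \<in> E\<^sup>+)}"
proof (rule transI)
  fix x y z
  assume "(x, y) \<in> {(u, w). (u, w) \<in> E\<^sup>+ \<or> ((u = a \<or> (u, a) \<in> E\<^sup>+) \<and> (b, w) \<in> E\<^sup>+)}"
     and "(y, z) \<in> {(u, w). (u, w) \<in> E\<^sup>+ \<or> ((u = a \<or> (u, a) \<in> E\<^sup>+) \<and> (b, w) \<in> E\<^sup>+)}"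
  hence 1: "(x, y) \<in> E\<^sup>+ \<or> (x = a \<or> (x, a) \<in> E\<^sup>+) \<and> (b, y) \<in> E\<^sup>+"
     and 2: "(y, z) \<in> E\<^sup>+ \<or> (y = a \<or> (y, a) \<in> E\<^sup>+) \<and> (b, z) \<in> E\<^sup>+" by auto
  have "(x, z) \<in> E\<^sup>+ \<or> (x = a \<or> (x, a) \<in> E\<^sup>+) \<and> (b, z) \<in> E\<^sup>+"
  proof (cases "(x, y) \<in> E\<^sup>+")
    case True
    show ?thesis using 2
    proof
      assume "(y, z) \<in> E\<^sup>+" thus ?thesis using True by (blast intro: trancl_trans)
    next
      assume "(y = a \<or> (y, a) \<in> E\<^sup>+) \<and> (b, z) \<in> E\<^sup>+"
      thus ?thesis using True by (blast intro: trancl_trans)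
    qed
  next
    case False
    hence xa: "x = a \<or> (x, a) \<in> E\<^sup>+" and yb: "(b, y) \<in> E\<^sup>+" using 1 by auto
    show ?thesis using 2
    proof
      assume "(y, z) \<in> E\<^sup>+" thus ?thesis using xa yb by (blast intro: trancl_trans)
    next
      assume "(y = a \<or> (y, a) \<in> E\<^sup>+) \<and> (b, z) \<in> E\<^sup>+"
      hence "(b, a) \<in> E\<^sup>+" using yb by (blast intro: trancl_trans)
      thus ?thesis using nb by simp
    qed
  qed
  thus "(x, z) \<in> {(u, w). (u, w) \<in> E\<^sup>+ \<or> ((u = a \<or> (u, a) \<in> E\<^sup>+) \<and> (b, w) \<in> E\<^sup>+)}" by simp
qed
lemma irrA:
  assumes "acyclic E" "(b, a) \<notin> E\<^sup>+"
  shows "(x, x) \<notin> {(u, w). (u, w) \<in> E\<^sup>+ \<or> ((u = a \<or> (u, a) \<in> E\<^sup>+) \<and> (b, w) \<in> E\<^sup>+)}"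
  using assms unfolding acyclic_def by (metis (mono_tags, lifting) case_prodD mem_Collect_eq trancl_trans)
lemma transB: "trans {(u, w). (\<psi> u, \<psi> w) \<in> E\<^sup>+}"
  unfolding trans_def by (metis (mono_tags, lifting) case_prodD case_prodI mem_Collect_eq trancl_trans)

lemma edges_iff[simp]: "(u, w) \<in> edges pa \<longleftrightarrow> u \<in> pa w"
  by (simp add: edges_def)

lemma finite_dags: assumes "finite V" shows "finite {G. dag_k V k G}"
proof -
  have inj: "inj_on (\<lambda>G. restrict G V) {G. dag_k V k G}"
  proof (rule inj_onI)
    fix G G' assume G: "G \<in> {G. dag_k V k G}" and G': "G' \<in> {G. dag_k V k G}"
      and eq: "restrict G V = restrict G' V"
    show "G = G'"
    proof
      fix v show "G v = G' v"
      proof (cases "v \<in> V")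
        case True thus ?thesis using fun_cong[OF eq, of v] by simp
      next
        case False thus ?thesis using G G' unfolding dag_k_def by simp
      qed
    qed
  qed
  have sub: "(\<lambda>G. restrict G V) ` {G. dag_k V k G} \<subseteq> (\<Pi>\<^sub>E i\<in>V. Pow V)"
    unfolding dag_k_def by (auto simp: PiE_iff) blast
  have "finite (\<Pi>\<^sub>E i\<in>V. Pow V)" using assms by (intro finite_PiE) auto
  hence "finite ((\<lambda>G. restrict G V) ` {G. dag_k V k G})" using sub by (rule finite_subset[rotated])
  thus ?thesis using inj by (rule finite_imageD)
qed

lemma dag_empty: "dag_k V k (\<lambda>_. {})"
  unfolding dag_k_def acyclic_def edges_def by simp

lemma opt_ge: "finite V \<Longrightarrow> dag_k V k G \<Longrightarrow> score p V G \<le> opt_score p V k"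
  unfolding opt_score_def by (rule Max_ge) (auto intro: finite_dags)

lemma opt_ex: assumes "finite V" shows "\<exists>G. optimal p V k G"
proof -
  have "opt_score p V k \<in> score p V ` {G. dag_k V k G}"
    unfolding opt_score_def using assms dag_empty by (intro Max_in) (auto intro: finite_dags)
  thus ?thesis unfolding optimal_def by auto
qed

theorem lemma9:
  fixes k :: nat and X1 :: "'i set" and Xa Xb :: 'i
    and D1 D2 :: "('i \<Rightarrow> 'v) pmf" and q :: "(bool \<times> ('i \<Rightarrow> 'v)) pmf"
    and \<alpha> \<beta> lam :: real and G :: "'i \<Rightarrow> 'i set"
  assumes k_pos: "0 < k"
    and X1_fin: "finite X1" and X1_card: "k \<le> card X1"
    and Xa_in: "Xa \<in> X1" and Xb_notin: "Xb \<notin> X1"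
    and fin_vals: "finite (set_pmf (marg (insert Xb X1) D2))"
    and D1_marg: "D1 = marg X1 D2"
    and \<alpha>_pos: "0 < \<alpha>" and \<beta>_pos: "0 < \<beta>"
    and I_unique: "\<And>G1 G2. optimal D1 X1 k G1 \<Longrightarrow> optimal D1 X1 k G2 \<Longrightarrow> markov_equiv X1 G1 G2"
    and I_gap: "\<And>G'. dag_k X1 k G' \<Longrightarrow> \<not> (\<exists>G1. optimal D1 X1 k G1 \<and> markov_equiv X1 G' G1)
                 \<Longrightarrow> score D1 X1 G' \<le> opt_score D1 X1 k - \<beta>"
    and II: "\<And>G' v. dag_k X1 k G' \<Longrightarrow> (\<exists>G1. optimal D1 X1 k G1 \<and> markov_equiv X1 G' G1)
                 \<Longrightarrow> v \<in> X1 \<Longrightarrow> Xa \<notin> G' v"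
    and III: "condH D1 Xa (X1 - {Xa}) = \<alpha>"
    and lam_pos: "0 < lam" and lam_bound: "lam < min \<alpha> (\<beta> / (3 * real (card (insert Xb X1))))"
    and D2_def: "D2 = map_pmf snd q"
    and C_indep: "map_pmf (\<lambda>(c, a). (c, restrict a X1)) q =
                  pair_pmf (map_pmf fst q) (map_pmf (\<lambda>(c, a). restrict a X1) q)"
    and C1: "\<And>c a. (c, a) \<in> set_pmf q \<Longrightarrow> c \<Longrightarrow> a Xb = a Xa"
    and C0: "(\<exists>x\<in>set_pmf q. \<not> fst x) \<Longrightarrow>
              (let q0 = cond_pmf q {x. \<not> fst x} in
                 map_pmf (\<lambda>(c, a). (a Xb, restrict a X1)) q0 =
                 pair_pmf (map_pmf (\<lambda>(c, a). a Xb) q0) (map_pmf (\<lambda>(c, a). restrict a X1) q0))"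
    and V: "max (condH D2 Xb {Xa}) (condH D2 Xa {Xb}) = lam"
    and G_dag: "dag_k (insert Xb X1) k G"
    and G_children: "\<exists>v\<in>insert Xb X1 - {Xa, Xb}. Xa \<in> G v \<or> Xb \<in> G v"
  shows "score D2 (insert Xb X1) G
           < opt_score D2 (insert Xb X1) k - \<beta> + 3 * real (card (insert Xb X1)) * lam"
proof -
  define V where "V = insert Xb X1"
  have finV: "finite V" using X1_fin V_def by simp
  have fin: "finite (set_pmf (marg V D2))" using fin_vals V_def by simp
  have XaXb: "Xa \<noteq> Xb" using Xa_in Xb_notin by auto
  have X1V: "X1 \<subseteq> V" using V_def by auto
  have cond1: "condH D1 v S = condH D2 v S" if "insert v S \<subseteq> X1" for v S
    using that unfolding condH_def D1_marg by (simp add: ent_marg)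
  have lamb: "condH D2 Xb {Xa} \<le> lam" and lama: "condH D2 Xa {Xb} \<le> lam" using V by auto
  have Gsub: "G v \<subseteq> V - {v}" and Gcard: "card (G v) \<le> k" if "v \<in> V" for v
    using G_dag that unfolding dag_k_def V_def by auto
  have Gout: "v \<notin> V \<Longrightarrow> G v = {}" for v using G_dag unfolding dag_k_def V_def by auto
  have Gacyc: "acyclic (edges G)" using G_dag unfolding dag_k_def by auto
  have Gfin: "finite (G v)" for v
    using Gsub[of v] Gout[of v] finV by (cases "v \<in> V") (auto intro: finite_subset)
  define F where "F v = condH D2 v (G v)" for v
  have repl: "condH D1 v (if Xb \<in> G v then insert Xa (G v - {Xb}) else G v) \<le> F v + lam"
    if v: "v \<in> X1" for v
  proof (cases "Xb \<in> G v")
    case True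
    define P where "P = G v - {Xb}"
    have GvP: "G v = insert Xb P" using True P_def by auto
    have PX1: "P \<subseteq> X1" using Gsub[of v] v X1V P_def V_def by auto
    have "condH D1 v (insert Xa P) = condH D2 v (insert Xa P)"
      using PX1 v Xa_in by (intro cond1) auto
    also have "\<dots> \<le> condH D2 v (insert Xb (insert Xa P)) + condH D2 Xb (insert Xa P)"
      using PX1 v Xa_in X1V V_def by (intro cond_chain[OF fin]) auto
    also have "condH D2 v (insert Xb (insert Xa P)) \<le> F v"
    proof -
      have "condH D2 v (G v \<union> {Xa}) \<le> condH D2 v (G v)"
        using PX1 v Xa_in X1V V_def GvP by (intro cond_reduce[OF fin]) auto
      moreover have "G v \<union> {Xa} = insert Xb (insert Xa P)" using GvP by auto
      ultimately show ?thesis unfolding F_def by simp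
    qed
    also have "condH D2 Xb (insert Xa P) \<le> lam"
    proof -
      have "condH D2 Xb ({Xa} \<union> P) \<le> condH D2 Xb {Xa}"
        using PX1 v Xa_in X1V V_def by (intro cond_reduce[OF fin]) auto
      thus ?thesis using lamb by simp
    qed
    finally show ?thesis using True P_def by simp
  next
    case False
    have "G v \<subseteq> X1" using Gsub[of v] v False V_def by auto
    hence "condH D1 v (G v) = F v" unfolding F_def using v by (intro cond1) auto
    thus ?thesis using False lam_pos by simp
  qed
  have Fnn: "0 \<le> F v" if "v \<in> V" for v
    unfolding F_def using Gsub[OF that] that by (intro cond_nn[OF fin]) auto
  have scoreG: "score D2 V G = - (sum F X1 + F Xb)"
    unfolding score_def V_def F_def using X1_fin Xb_notin by simp
  obtain v0 where v0: "v0 \<in> X1" "v0 \<noteq> Xa" "v0 \<noteq> Xb" "Xa \<in> G v0 \<or> Xb \<in> G v0"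
    using G_children V_def by auto
  have "\<exists>G'. dag_k X1 k G' \<and> (\<exists>v\<in>X1. Xa \<in> G' v) \<and> score D2 V G \<le> score D1 X1 G' + real (card X1) * lam"
  proof (cases "(Xb, Xa) \<in> (edges G)\<^sup>+")
    case False
    define G' where "G' v = (if v \<in> X1 then (if Xb \<in> G v then insert Xa (G v - {Xb}) else G v) else {})" for v
    have dag: "dag_k X1 k G'"
      unfolding dag_k_def
    proof (intro conjI ballI allI impI)
      fix v assume v: "v \<in> X1"
      show "G' v \<subseteq> X1 - {v}"
      proof (cases "Xb \<in> G v")
        case True
        hence "v \<noteq> Xa" using False by auto
        thus ?thesis using True Gsub[of v] v V_def Xa_in unfolding G'_def by auto
      next
        case False
        thus ?thesis using Gsub[of v] v V_def unfolding G'_def by auto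
      qed
      show "card (G' v) \<le> k"
      proof (cases "Xb \<in> G v")
        case True
        have "card (insert Xa (G v - {Xb})) \<le> Suc (card (G v - {Xb}))" using Gfin[of v] by (simp add: card_insert_if)
        also have "\<dots> = card (G v)" using True Gfin[of v] card_Suc_Diff1 by metis
        finally show ?thesis using True Gcard[of v] v V_def unfolding G'_def by simp
      next
        case False
        thus ?thesis using Gcard[of v] v V_def unfolding G'_def by simp
      qed
    next
      fix v assume "v \<notin> X1" thus "G' v = {}" unfolding G'_def by simp
    next
      let ?E = "edges G"
      define R where "R = {(u, w). (u, w) \<in> ?E\<^sup>+ \<or> ((u = Xa \<or> (u, Xa) \<in> ?E\<^sup>+) \<and> (Xb, w) \<in> ?E\<^sup>+)}"
      have step: "u \<in> G w \<Longrightarrow> (u, w) \<in> ?E\<^sup>+" for u w by (simp add: r_into_trancl')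
      have sub: "edges G' \<subseteq> R"
        unfolding R_def G'_def by (auto split: if_splits intro: step)
      have "trans R"
        unfolding R_def by (rule transA[OF False])
      hence "(edges G')\<^sup>+ \<subseteq> R" using trancl_mono sub by (metis subrelI trancl_id)
      moreover have "(x, x) \<notin> R" for x
        unfolding R_def by (rule irrA[OF Gacyc False])
      ultimately show "acyclic (edges G')" unfolding acyclic_def by auto
    qed
    have child: "Xa \<in> G' v0" using v0 unfolding G'_def by auto
    have s1: "score D2 V G \<le> - sum F X1" using scoreG Fnn[of Xb] V_def by simp
    have s2: "(\<Sum>v\<in>X1. condH D1 v (G' v) - lam) \<le> sum F X1"
    proof (rule sum_mono)
      fix v assume "v \<in> X1"
      thus "condH D1 v (G' v) - lam \<le> F v" using repl[of v] unfolding G'_def by simp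
    qed
    have s3: "(\<Sum>v\<in>X1. condH D1 v (G' v) - lam) = (\<Sum>v\<in>X1. condH D1 v (G' v)) - real (card X1) * lam"
      by (simp add: sum_subtractf)
    have "score D2 V G \<le> score D1 X1 G' + real (card X1) * lam"
      using s1 s2 s3 unfolding score_def[of D1] by linarith
    thus ?thesis using dag child v0 by blast
  next
    case True
    let ?E = "edges G"
    have XaGb: "Xa \<notin> G Xb"
    proof
      assume "Xa \<in> G Xb"
      hence "(Xa, Xb) \<in> ?E\<^sup>+" by auto
      with True have "(Xb, Xb) \<in> ?E\<^sup>+" by (rule trancl_trans)
      thus False using Gacyc unfolding acyclic_def by auto
    qed
    define G' where "G' v = (if v = Xa then G Xb else if v \<in> X1 then (if Xb \<in> G v then insert Xa (G v - {Xb}) else G v) else {})" for v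
    have dag: "dag_k X1 k G'"
      unfolding dag_k_def
    proof (intro conjI ballI allI impI)
      fix v assume v: "v \<in> X1"
      show "G' v \<subseteq> X1 - {v}"
      proof (cases "v = Xa")
        case True
        thus ?thesis using Gsub[of Xb] XaGb V_def unfolding G'_def by auto
      next
        case vne: False
        show ?thesis
        proof (cases "Xb \<in> G v")
          case True
          thus ?thesis using vne Gsub[of v] v V_def Xa_in unfolding G'_def by auto
        next
          case False
          thus ?thesis using vne Gsub[of v] v V_def unfolding G'_def by auto
        qed
      qed
      show "card (G' v) \<le> k"
      proof (cases "v = Xa")
        case True
        thus ?thesis using Gcard[of Xb] V_def unfolding G'_def by simp
      next
        case vne: False
        show ?thesis
        proof (cases "Xb \<in> G v")
          case True
          have "card (insert Xa (G v - {Xb})) \<le> Suc (card (G v - {Xb}))" using Gfin[of v] by (simp add: card_insert_if)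
          also have "\<dots> = card (G v)" using True Gfin[of v] card_Suc_Diff1 by metis
          finally show ?thesis using vne True Gcard[of v] v V_def unfolding G'_def by simp
        next
          case False
          thus ?thesis using vne Gcard[of v] v V_def unfolding G'_def by simp
        qed
      qed
    next
      fix v assume "v \<notin> X1" thus "G' v = {}" unfolding G'_def using Xa_in by auto
    next
      define \<psi> where "\<psi> x = (if x = Xa then Xb else x)" for x
      define R where "R = {(u, w). (\<psi> u, \<psi> w) \<in> ?E\<^sup>+}"
      have sub: "edges G' \<subseteq> R"
      proof
        fix e assume "e \<in> edges G'"
        then obtain u w where e: "e = (u, w)" "u \<in> G' w" by (cases e) auto
        show "e \<in> R"
        proof (cases "w = Xa")
          case True
          hence "u \<in> G Xb" "u \<noteq> Xa" using e XaGb unfolding G'_def by auto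
          thus ?thesis using e True unfolding R_def \<psi>_def by auto
        next
          case wne: False
          hence w: "w \<in> X1" "\<psi> w = w" using e unfolding G'_def \<psi>_def by (auto split: if_splits)
          show ?thesis
          proof (cases "u = Xa")
            case True
            have "(Xb, w) \<in> ?E\<^sup>+"
            proof (cases "Xb \<in> G w")
              case True thus ?thesis by auto
            next
              case False
              hence "Xa \<in> G w" using e \<open>u = Xa\<close> wne w unfolding G'_def by auto
              hence "(Xa, w) \<in> ?E\<^sup>+" by auto
              thus ?thesis using \<open>(Xb, Xa) \<in> ?E\<^sup>+\<close> by (rule trancl_trans[rotated])
            qed
            thus ?thesis using e True w unfolding R_def \<psi>_def by auto
          next
            case une: False
            hence "u \<in> G w" using e wne unfolding G'_def by (auto split: if_splits)
            thus ?thesis using e une w unfolding R_def \<psi>_def by auto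
          qed
        qed
      qed
      have "trans R" unfolding R_def by (rule transB)
      hence "(edges G')\<^sup>+ \<subseteq> R" using trancl_mono sub by (metis subrelI trancl_id)
      moreover have "(x, x) \<notin> R" for x
        using Gacyc unfolding R_def acyclic_def by auto
      ultimately show "acyclic (edges G')" unfolding acyclic_def by auto
    qed
    have child: "Xa \<in> G' v0" using v0 unfolding G'_def by auto
    define Hh where "Hh v = (if v = Xa then F Xb else F v)" for v
    have bnd: "condH D1 v (G' v) \<le> Hh v + lam" if v: "v \<in> X1" for v
    proof (cases "v = Xa")
      case True
      have GbX1: "G Xb \<subseteq> X1" using Gsub[of Xb] V_def by auto
      have "condH D1 Xa (G Xb) = condH D2 Xa (G Xb)" using GbX1 Xa_in by (intro cond1) auto
      also have "\<dots> \<le> condH D2 Xa (insert Xb (G Xb)) + condH D2 Xb (G Xb)"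
        using GbX1 Xa_in V_def by (intro cond_chain[OF fin]) auto
      also have "condH D2 Xa (insert Xb (G Xb)) \<le> lam"
      proof -
        have "condH D2 Xa ({Xb} \<union> G Xb) \<le> condH D2 Xa {Xb}"
          using GbX1 Xa_in V_def by (intro cond_reduce[OF fin]) auto
        thus ?thesis using lama by simp
      qed
      finally show ?thesis using True unfolding G'_def Hh_def F_def by simp
    next
      case False
      thus ?thesis using repl[OF v] v unfolding G'_def Hh_def by simp
    qed
    have "sum F X1 = F Xa + sum F (X1 - {Xa})" using X1_fin Xa_in by (simp add: sum.remove)
    moreover have "sum Hh X1 = F Xb + sum F (X1 - {Xa})"
      using X1_fin Xa_in by (simp add: sum.remove Hh_def)
    ultimately have s1: "score D2 V G \<le> - sum Hh X1" using scoreG Fnn[of Xa] Xa_in V_def by simp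
    have s2: "(\<Sum>v\<in>X1. condH D1 v (G' v) - lam) \<le> sum Hh X1"
    proof (rule sum_mono)
      fix v assume "v \<in> X1"
      thus "condH D1 v (G' v) - lam \<le> Hh v" using bnd[of v] by simp
    qed
    have s3: "(\<Sum>v\<in>X1. condH D1 v (G' v) - lam) = (\<Sum>v\<in>X1. condH D1 v (G' v)) - real (card X1) * lam"
      by (simp add: sum_subtractf)
    have "score D2 V G \<le> score D1 X1 G' + real (card X1) * lam"
      using s1 s2 s3 unfolding score_def[of D1] by linarith
    thus ?thesis using dag child v0 by blast
  qed
  then obtain G' where G'dag: "dag_k X1 k G'" and G'ch: "\<exists>v\<in>X1. Xa \<in> G' v"
    and G'sc: "score D2 V G \<le> score D1 X1 G' + real (card X1) * lam" by blast
  have "\<not> (\<exists>G1. optimal D1 X1 k G1 \<and> markov_equiv X1 G' G1)"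
    using II[OF G'dag] G'ch by blast
  hence gap: "score D1 X1 G' \<le> opt_score D1 X1 k - \<beta>" using I_gap[OF G'dag] by blast
  obtain G1 where G1: "optimal D1 X1 k G1" using opt_ex[OF X1_fin] by blast
  define G1e where "G1e v = (if v = Xb then {Xa} else G1 v)" for v
  have G1dag: "dag_k X1 k G1" and G1sc: "score D1 X1 G1 = opt_score D1 X1 k"
    using G1 unfolding optimal_def by auto
  have G1sub: "v \<in> X1 \<Longrightarrow> G1 v \<subseteq> X1 - {v}" and G1out: "v \<notin> X1 \<Longrightarrow> G1 v = {}" for v
    using G1dag unfolding dag_k_def by auto
  have G1edag: "dag_k V k G1e"
    unfolding dag_k_def
  proof (intro conjI ballI allI impI)
    fix v assume "v \<in> V"
    thus "G1e v \<subseteq> V - {v}" "card (G1e v) \<le> k"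
      using G1sub[of v] G1dag k_pos Xa_in XaXb Xb_notin unfolding G1e_def V_def dag_k_def by auto
  next
    fix v assume "v \<notin> V" thus "G1e v = {}" using G1out[of v] unfolding G1e_def V_def by auto
  next
    have noout: "(Xb, w) \<notin> edges G1" for w
      using G1sub[of w] G1out[of w] Xb_notin by (cases "w \<in> X1") auto
    have "edges G1e = insert (Xa, Xb) (edges G1)"
      using G1out[of Xb] Xb_notin unfolding G1e_def edges_def by auto
    moreover have "acyclic (edges G1)" using G1dag unfolding dag_k_def by auto
    moreover have "(Xb, Xa) \<notin> (edges G1)\<^sup>*"
    proof
      assume "(Xb, Xa) \<in> (edges G1)\<^sup>*"
      thus False using noout XaXb by (cases rule: converse_rtranclE) auto
    qed
    ultimately show "acyclic (edges G1e)" by simp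
  qed
  have "score D2 V G1e = - ((\<Sum>v\<in>X1. condH D2 v (G1 v)) + condH D2 Xb {Xa})"
  proof -
    have "(\<Sum>v\<in>X1. condH D2 v (G1e v)) = (\<Sum>v\<in>X1. condH D2 v (G1 v))"
      using Xb_notin unfolding G1e_def by (intro sum.cong) auto
    thus ?thesis unfolding score_def V_def using X1_fin Xb_notin by (simp add: G1e_def)
  qed
  also have "(\<Sum>v\<in>X1. condH D2 v (G1 v)) = (\<Sum>v\<in>X1. condH D1 v (G1 v))"
    using G1sub by (intro sum.cong refl cond1[symmetric]) auto
  finally have "score D2 V G1e = score D1 X1 G1 - condH D2 Xb {Xa}" unfolding score_def by simp
  hence "opt_score D1 X1 k - lam \<le> opt_score D2 V k"
    using opt_ge[OF finV G1edag, of D2] G1sc lamb by simp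
  moreover have "card V = Suc (card X1)" using V_def X1_fin Xb_notin by simp
  ultimately have "score D2 V G \<le> opt_score D2 V k - \<beta> + real (card V) * lam"
    using G'sc gap by (simp add: algebra_simps)
  moreover have "real (card V) * lam < 3 * real (card V) * lam"
    using lam_pos \<open>card V = Suc (card X1)\<close> by simp
  ultimately have fin_ineq: "score D2 V G < opt_score D2 V k - \<beta> + 3 * real (card V) * lam"
    by linarith
  have V_eq: "insert Xb X1 = V" using V_def by simp
  show ?thesis unfolding V_eq by (rule fin_ineq)
qed

end
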